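(* Fix integers $n\ge1$, $k_1,k_2\ge0$ and $C>0$. For $\delta\in(0,1)$ and $\kappa\ge0$ put $R=\kappa\delta/2$ and \[H_{k_1,k_2}=\int_{-\pi}^{\pi}e^{\kappa\cos s+R\,r(-\delta e^{is})}e^{-i(n+k_1-1)s}\tilde\phi_{k_1,k_2}(0,\delta e^{is})\,ds .\] Then for every $N\in\mathbb{N}$, \[H_{k_1,k_2}=2\pi\sum_{|\alpha|\le N}I_{n+k_1-1-\alpha_2}(\kappa)\frac{\partial^\alpha\tilde\phi_{k_1,k_2}(0,0)\,\kappa^{\alpha_1}}{2^{\alpha_1}\alpha!}\delta^{|\alpha|}+O(\delta^{N+1})\] as $\delta\to0^+$, uniformly as $\kappa$ runs through $[0,C]$, where $\alpha=(\alpha_1,\alpha_2)\in\mathbb{N}^2$ and $\partial^\alpha=\partial_R^{\alpha_1}\partial_\xi^{\alpha_2}$.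
   Context: $r(\lambda)=1+\frac1\lambda-\pi(1+\lambda)\cot(\pi\lambda)$ for $\lambda\notin\mathbb{Z}$ and $r(0)=0$ (holomorphic on its domain). $\tilde\phi_{k_1,k_2}(R,\xi)=e^{R\,r(-\xi)}\frac{(\pi\xi)^{n+k_1}\cos(\pi\xi)^{k_1}(1-\xi)^{n+k_1+k_2}}{\sin(\pi\xi)^{n+k_1}}$ for $\xi\notin\mathbb{Z}$ and $\tilde\phi_{k_1,k_2}(R,0)=1$. $I_\nu$ is the modified Bessel function of integer order $\nu$ (with $I_{-\nu}=I_\nu$), $I_\nu(\zeta)=\sum_{k\ge0}\frac{\zeta^{2k+\nu}}{2^{2k+\nu}k!\,\Gamma(k+\nu+1)}$, and for $s>0$, $I_\nu(s)=\frac1{2\pi}\int_{-\pi}^\pi e^{s\cos\xi-i\nu\xi}d\xi$. *)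

theory Defs
  imports "HOL-Analysis.Analysis"
begin

text \<open>r(lambda) = 1 + 1/lambda - pi (1+lambda) cot(pi lambda) for lambda not an integer, r(0) = 0.
  At nonzero integers (where the paper leaves r undefined) we use the value 0.\<close>
definition r_fun :: "complex \<Rightarrow> complex" where
  "r_fun l = (if l \<in> \<int> then 0 else 1 + 1 / l - of_real pi * (1 + l) * cot (of_real pi * l))"

text \<open>phi tilde_{k1,k2}(R, xi); value 1 at xi = 0, value 0 at nonzero integers (undefined in the paper).\<close>
definition phi_tilde :: "nat \<Rightarrow> nat \<Rightarrow> nat \<Rightarrow> complex \<Rightarrow> complex \<Rightarrow> complex" where
  "phi_tilde n k1 k2 R xi =
     (if xi = 0 then 1
      else if xi \<in> \<int> then 0
      else exp (R * r_fun (- xi)) * (of_real pi * xi) ^ (n + k1) * cos (of_real pi * xi) ^ k1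
             * (1 - xi) ^ (n + k1 + k2) / sin (of_real pi * xi) ^ (n + k1))"

definition phi_deriv :: "nat \<Rightarrow> nat \<Rightarrow> nat \<Rightarrow> nat \<Rightarrow> nat \<Rightarrow> complex" where
  "phi_deriv n k1 k2 a1 a2 =
     (deriv ^^ a1) (\<lambda>R. (deriv ^^ a2) (\<lambda>xi. phi_tilde n k1 k2 R xi) 0) 0"

text \<open>Modified Bessel function of integer order nu (using I_{-nu} = I_nu), via its power series.\<close>
definition besselI :: "int \<Rightarrow> real \<Rightarrow> real" where
  "besselI nu x = (\<Sum>k. (x / 2) ^ (2 * k + nat \<bar>nu\<bar>) / (fact k * fact (k + nat \<bar>nu\<bar>)))"

definition H_int :: "nat \<Rightarrow> nat \<Rightarrow> nat \<Rightarrow> real \<Rightarrow> real \<Rightarrow> complex" where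
  "H_int n k1 k2 kappa delta =
     (let R = kappa * delta / 2 in
      integral {-pi..pi} (\<lambda>s.
        exp (of_real (kappa * cos s) + of_real R * r_fun (- (of_real delta * exp (\<i> * of_real s))))
        * exp (- \<i> * of_nat (n + k1 - 1) * of_real s)
        * phi_tilde n k1 k2 0 (of_real delta * exp (\<i> * of_real s))))"

end

theory Submission
  imports Defs "HOL-Complex_Analysis.Complex_Analysis"
begin


lemma exp_i_int_pi: "exp (\<i> * (of_int p * of_real pi)) = exp (- (\<i> * (of_int p * of_real pi)))"
proof -
  have "exp (\<i> * (of_int p * of_real pi)) = cis (of_int p * pi)"
    by (simp add: cis_conv_exp)
  moreover have "exp (- (\<i> * (of_int p * of_real pi))) = cis (- (of_int p * pi))"
    by (simp add: cis_conv_exp)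
  moreover have "sin (of_int p * pi) = 0" by (metis mult.commute sin_npi_int)
  ultimately show ?thesis by (simp add: cis.ctr complex_eq_iff)
qed

lemma int_exp:
  fixes p :: int
  shows "((\<lambda>s::real. exp (\<i> * of_int p * of_real s)) has_integral (if p = 0 then of_real (2*pi) else 0)) {-pi..pi}"
proof (cases "p = 0")
  case True
  then show ?thesis using has_integral_const_real[of "1::complex" "-pi" pi]
    by (simp add: scaleR_conv_of_real)
next
  case False
  let ?F = "\<lambda>z::complex. exp (\<i> * of_int p * z) / (\<i> * of_int p)"
  have d: "((\<lambda>s::real. ?F (of_real s)) has_vector_derivative exp (\<i> * of_int p * of_real x)) (at x within {-pi..pi})" for x
  proof (rule has_vector_derivative_real_field)
    show "(?F has_field_derivative exp (\<i> * of_int p * of_real x)) (at (of_real x))"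
      using False by (auto intro!: derivative_eq_intros)
  qed
  have "((\<lambda>s. exp (\<i> * of_int p * of_real s)) has_integral (?F (of_real pi) - ?F (of_real (-pi)))) {-pi..pi}"
    by (rule fundamental_theorem_of_calculus) (use d pi_ge_zero in auto)
  moreover have "?F (of_real pi) - ?F (of_real (-pi)) = 0"
    using exp_i_int_pi[of p] by (simp add: mult.assoc)
  ultimately show ?thesis using False by simp
qed

lemma cos_pow_exp:
  fixes s :: real
  shows "of_real (cos s) ^ j = (\<Sum>l\<le>j. of_nat (j choose l) * exp (\<i> * of_int (2 * int l - int j) * of_real s)) / 2 ^ j"
proof -
  have "of_real (cos s) = (exp (\<i> * of_real s) + exp (- (\<i> * of_real s))) / (2::complex)"
    by (simp add: cos_of_real[symmetric] cos_exp_eq)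
  hence "of_real (cos s) ^ j = (exp (\<i> * of_real s) + exp (- (\<i> * of_real s))) ^ j / (2::complex) ^ j"
    by (metis power_divide)
  also have "(exp (\<i> * of_real s) + exp (- (\<i> * of_real s))) ^ j =
     (\<Sum>l\<le>j. of_nat (j choose l) * exp (\<i> * of_real s) ^ l * exp (- (\<i> * of_real s)) ^ (j - l))"
    by (rule binomial_ring)
  also have "\<dots> = (\<Sum>l\<le>j. of_nat (j choose l) * exp (\<i> * of_int (2 * int l - int j) * of_real s))"
  proof (rule sum.cong[OF refl])
    fix l assume "l \<in> {..j}"
    hence lj: "l \<le> j" by simp
    have "exp (\<i> * of_real s) ^ l * exp (- (\<i> * of_real s)) ^ (j - l)
        = exp (of_nat l * (\<i> * of_real s) + of_nat (j - l) * (- (\<i> * of_real s)))"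
      by (simp only: exp_add exp_of_nat_mult mult_minus_right[symmetric])
    also have "of_nat l * (\<i> * of_real s) + of_nat (j - l) * (- (\<i> * of_real s))
             = \<i> * of_int (2 * int l - int j) * (of_real s :: complex)"
      using lj by (simp add: of_nat_diff algebra_simps)
    finally show "of_nat (j choose l) * exp (\<i> * of_real s) ^ l * exp (- (\<i> * of_real s)) ^ (j - l)
        = of_nat (j choose l) * exp (\<i> * of_int (2 * int l - int j) * of_real s)" by simp
  qed
  finally show ?thesis .
qed

definition cc :: "int \<Rightarrow> nat \<Rightarrow> nat" where
  "cc \<nu> j = (\<Sum>l\<le>j. if 2 * int l - int j = \<nu> then j choose l else 0)"

lemma cos_pow_int:
  "((\<lambda>s::real. of_real (cos s) ^ j * exp (- \<i> * of_int \<nu> * of_real s))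
     has_integral of_real (2 * pi * cc \<nu> j / 2 ^ j)) {-pi..pi}"
proof -
  have eq: "of_real (cos s) ^ j * exp (- \<i> * of_int \<nu> * of_real s) =
     (\<Sum>l\<le>j. (of_nat (j choose l) / 2 ^ j) * exp (\<i> * of_int (2 * int l - int j - \<nu>) * of_real s))"
    for s :: real
  proof -
    have "of_real (cos s) ^ j * exp (- \<i> * of_int \<nu> * of_real s) =
      (\<Sum>l\<le>j. (of_nat (j choose l) / 2 ^ j) * (exp (\<i> * of_int (2 * int l - int j) * of_real s) * exp (- \<i> * of_int \<nu> * of_real s)))"
      by (simp add: cos_pow_exp sum_distrib_right sum_divide_distrib mult.assoc)
    also have "\<dots> = (\<Sum>l\<le>j. (of_nat (j choose l) / 2 ^ j) * exp (\<i> * of_int (2 * int l - int j - \<nu>) * of_real s))"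
      by (rule sum.cong[OF refl]) (simp add: exp_add[symmetric] algebra_simps)
    finally show ?thesis .
  qed
  have i1: "((\<lambda>s::real. \<Sum>l\<le>j. (of_nat (j choose l) / 2 ^ j) * exp (\<i> * of_int (2 * int l - int j - \<nu>) * of_real s))
     has_integral (\<Sum>l\<le>j. (of_nat (j choose l) / 2 ^ j) * (if 2 * int l - int j - \<nu> = 0 then of_real (2*pi) else 0))) {-pi..pi}"
    by (intro has_integral_sum finite_atMost has_integral_mult_right int_exp)
  have i2: "(\<Sum>l\<le>j. (of_nat (j choose l) / 2 ^ j) * (if 2 * int l - int j - \<nu> = 0 then of_real (2*pi) else 0))
     = (of_real (2 * pi * cc \<nu> j / 2 ^ j) :: complex)"
    unfolding cc_def of_nat_sum of_real_sum sum_divide_distrib sum_distrib_left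
    by (rule sum.cong[OF refl]) auto
  show ?thesis unfolding eq using i1 unfolding i2 .
qed

lemma cc_zero:
  assumes "\<nexists>k. j = 2 * k + nat \<bar>\<nu>\<bar>"
  shows "cc \<nu> j = 0"
  unfolding cc_def
proof (rule sum.neutral, rule ballI)
  fix l assume l: "l \<in> {..j}"
  have "2 * int l - int j \<noteq> \<nu>"
  proof
    assume e: "2 * int l - int j = \<nu>"
    show False
    proof (cases "\<nu> \<ge> 0")
      case True
      hence "j = 2 * (j - l) + nat \<bar>\<nu>\<bar>" using e l by auto
      thus False using assms by blast
    next
      case False
      hence "j = 2 * l + nat \<bar>\<nu>\<bar>" using e l by auto
      thus False using assms by blast
    qed
  qed
  thus "(if 2 * int l - int j = \<nu> then j choose l else 0) = 0" by simp
qed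

lemma cc_val:
  "real (cc \<nu> (2 * k + nat \<bar>\<nu>\<bar>)) = fact (2 * k + nat \<bar>\<nu>\<bar>) / (fact k * fact (k + nat \<bar>\<nu>\<bar>))"
proof -
  define a where "a = nat \<bar>\<nu>\<bar>"
  define j where "j = 2 * k + a"
  define l0 where "l0 = (if \<nu> \<ge> 0 then k + a else k)"
  have iff: "(2 * int l - int j = \<nu>) \<longleftrightarrow> l = l0" for l
    unfolding l0_def j_def a_def by auto
  have "cc \<nu> j = (\<Sum>l\<le>j. if l = l0 then j choose l else 0)"
    unfolding cc_def by (rule sum.cong[OF refl]) (simp add: iff)
  also have "\<dots> = j choose l0"
    by (simp add: sum.delta l0_def j_def)
  finally have "real (cc \<nu> j) = fact j / (fact l0 * fact (j - l0))"
    by (simp add: binomial_fact l0_def j_def)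
  moreover have "fact l0 * fact (j - l0) = (fact k * fact (k + a) :: real)"
    unfolding l0_def j_def by auto
  ultimately show ?thesis unfolding j_def a_def by simp
qed

lemma integral_norm_le_const:
  fixes f :: "real \<Rightarrow> 'b::real_normed_vector"
  assumes "f integrable_on {a..b}" "a \<le> b" "\<And>x. x \<in> {a..b} \<Longrightarrow> norm (f x) \<le> B"
  shows "norm (integral {a..b} f) \<le> B * (b - a)"
proof -
  have "a \<in> {a..b}" using assms(2) by simp
  hence "0 \<le> B" using assms(3)[of a] norm_ge_zero[of "f a"] by linarith
  from has_integral_bound_real[OF this finite.emptyI integrable_integral[OF assms(1)]] assms
  show ?thesis by auto
qed

lemma bessel_integral:
  fixes \<kappa> :: real and \<nu> :: int
  shows "integral {-pi..pi} (\<lambda>s. exp (of_real (\<kappa> * cos s)) * exp (- \<i> * of_int \<nu> * of_real s))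
         = of_real (2 * pi * besselI \<nu> \<kappa>)"
proof -
  define E where "E = (\<lambda>s::real. exp (- \<i> * of_int \<nu> * of_real s))"
  define L where "L = integral {-pi..pi} (\<lambda>s. exp (of_real (\<kappa> * cos s)) * E s)"
  define a where "a = (\<lambda>j. of_real (\<kappa> ^ j / fact j * (2 * pi * cc \<nu> j / 2 ^ j)) :: complex)"
  have normE: "norm (E s) = 1" for s unfolding E_def by (simp add: norm_exp_eq_Re)
  have int_n: "((\<lambda>s. (\<Sum>j\<le>n. of_real (\<kappa> * cos s) ^ j / fact j) * E s) has_integral (\<Sum>j\<le>n. a j)) {-pi..pi}" for n
  proof -
    have "((\<lambda>s. \<Sum>j\<le>n. of_real (\<kappa> ^ j / fact j) * (of_real (cos s) ^ j * E s)) has_integral (\<Sum>j\<le>n. a j)) {-pi..pi}"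
      unfolding a_def of_real_mult[of "\<kappa> ^ j / fact j" for j]
      unfolding E_def by (intro has_integral_sum finite_atMost has_integral_mult_right cos_pow_int)
    moreover have "(\<Sum>j\<le>n. of_real (\<kappa> ^ j / fact j) * (of_real (cos s) ^ j * E s)) = (\<Sum>j\<le>n. of_real (\<kappa> * cos s) ^ j / fact j) * E s" for s
      by (simp add: sum_distrib_right power_mult_distrib mult.assoc)
    ultimately show ?thesis by simp
  qed
  have contE: "continuous_on {-pi..pi} E" unfolding E_def by (intro continuous_intros)
  have intL: "(\<lambda>s. exp (of_real (\<kappa> * cos s)) * E s) integrable_on {-pi..pi}"
    by (intro integrable_continuous_interval continuous_intros contE)
  have bound: "norm (L - (\<Sum>j\<le>n. a j)) \<le> exp \<bar>\<kappa>\<bar> * \<bar>\<kappa>\<bar> ^ Suc n / fact n * (2 * pi)" for n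
  proof -
    have "L - (\<Sum>j\<le>n. a j) = integral {-pi..pi} (\<lambda>s. exp (of_real (\<kappa> * cos s)) * E s - (\<Sum>j\<le>n. of_real (\<kappa> * cos s) ^ j / fact j) * E s)"
      unfolding L_def using intL int_n[of n] by (simp add: integral_diff integrable_integral has_integral_integrable integral_unique)
    also have "norm \<dots> \<le> exp \<bar>\<kappa>\<bar> * \<bar>\<kappa>\<bar> ^ Suc n / fact n * (pi - - pi)"
    proof (rule integral_norm_le_const)
      show "(\<lambda>s. exp (of_real (\<kappa> * cos s)) * E s - (\<Sum>j\<le>n. of_real (\<kappa> * cos s) ^ j / fact j) * E s) integrable_on {-pi..pi}"
        using intL int_n[of n] by (intro integrable_diff) (auto simp: has_integral_integrable)
      show "- pi \<le> pi" using pi_ge_zero by linarith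
      fix s :: real
      define z where "z = (of_real (\<kappa> * cos s) :: complex)"
      have nz: "norm z \<le> \<bar>\<kappa>\<bar>" unfolding z_def norm_mult norm_of_real using abs_cos_le_one[of s] mult_left_le_one_le[of "\<bar>\<kappa>\<bar>" "\<bar>cos s\<bar>"] by (simp add: abs_mult mult.commute)
      have "norm (exp z * E s - (\<Sum>j\<le>n. z ^ j / fact j) * E s) = norm (exp z - (\<Sum>j\<le>n. z ^ j / fact j))"
        by (simp add: left_diff_distrib[symmetric] norm_mult normE)
      also have "\<dots> \<le> exp (norm z) * (norm z ^ Suc n) / fact n" by (rule Taylor_exp_field)
      also have "\<dots> \<le> exp \<bar>\<kappa>\<bar> * \<bar>\<kappa>\<bar> ^ Suc n / fact n"
        using nz by (intro divide_right_mono mult_mono power_mono) auto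
      finally show "norm (exp (of_real (\<kappa> * cos s)) * E s - (\<Sum>j\<le>n. of_real (\<kappa> * cos s) ^ j / fact j) * E s)
          \<le> exp \<bar>\<kappa>\<bar> * \<bar>\<kappa>\<bar> ^ Suc n / fact n" unfolding z_def .
    qed
    finally show ?thesis by simp
  qed
  have lim0: "(\<lambda>n. exp \<bar>\<kappa>\<bar> * \<bar>\<kappa>\<bar> ^ Suc n / fact n * (2 * pi)) \<longlonglongrightarrow> 0"
  proof -
    have "(\<lambda>n. \<bar>\<kappa>\<bar> ^ n / fact n) \<longlonglongrightarrow> 0"
      using summable_LIMSEQ_zero [OF summable_exp] by (auto simp add: inverse_eq_divide)
    hence "(\<lambda>n. (exp \<bar>\<kappa>\<bar> * \<bar>\<kappa>\<bar> * (2 * pi)) * (\<bar>\<kappa>\<bar> ^ n / fact n)) \<longlonglongrightarrow> (exp \<bar>\<kappa>\<bar> * \<bar>\<kappa>\<bar> * (2 * pi)) * 0"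
      by (intro tendsto_mult tendsto_const)
    thus ?thesis by (simp add: field_simps)
  qed
  have "(\<lambda>n. L - (\<Sum>j\<le>n. a j)) \<longlonglongrightarrow> 0"
    by (rule Lim_null_comparison[OF _ lim0]) (use bound in auto)
  from tendsto_diff[OF tendsto_const this, of L]
  have "(\<lambda>n. (\<Sum>j\<le>n. a j)) \<longlonglongrightarrow> L" by simp
  hence asums: "a sums L" by (simp add: sums_def_le)
  define A where "A = nat \<bar>\<nu>\<bar>"
  define g where "g = (\<lambda>k::nat. 2 * k + A)"
  have sm: "strict_mono g" unfolding g_def by (rule strict_monoI) auto
  have z: "a n = 0" if "n \<notin> range g" for n
  proof -
    have "\<nexists>k. n = 2 * k + nat \<bar>\<nu>\<bar>" using that unfolding g_def A_def by auto
    from cc_zero[OF this] show ?thesis unfolding a_def by simp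
  qed
  have "(\<lambda>k. a (g k)) sums L"
    using sums_mono_reindex[OF sm, where f=a and c=L] asums z by blast
  moreover have "a (g k) = of_real (2 * pi * ((\<kappa> / 2) ^ (2 * k + A) / (fact k * fact (k + A))))" for k
  proof -
    have "real (cc \<nu> (g k)) = fact (g k) / (fact k * fact (k + A))"
      unfolding g_def A_def by (rule cc_val)
    moreover have "fact (g k) > (0::real)" "fact k * fact (k + A) > (0::real)" by auto
    ultimately have "\<kappa> ^ g k / fact (g k) * (2 * pi * real (cc \<nu> (g k)) / 2 ^ g k)
        = 2 * pi * ((\<kappa> / 2) ^ (2 * k + A) / (fact k * fact (k + A)))"
      unfolding g_def power_divide by (simp add: divide_simps)
    thus ?thesis unfolding a_def by simp
  qed
  ultimately have s2: "(\<lambda>k. of_real (2 * pi * ((\<kappa> / 2) ^ (2 * k + A) / (fact k * fact (k + A)))) :: complex) sums L"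
    by simp
  from sums_Im[OF s2] have "(\<lambda>k. 0) sums Im L" unfolding Im_complex_of_real .
  hence "Im L = 0" using sums_unique[OF sums_zero] sums_unique by metis
  hence Lr: "L = of_real (Re L)" by (simp add: complex_eq_iff)
  from sums_Re[OF s2] have "(\<lambda>k. 2 * pi * ((\<kappa> / 2) ^ (2 * k + A) / (fact k * fact (k + A)))) sums Re L" unfolding Re_complex_of_real .
  from sums_divide[OF this, of "2 * pi"]
  have "(\<lambda>k. ((\<kappa> / 2) ^ (2 * k + A) / (fact k * fact (k + A)))) sums (Re L / (2 * pi))"
    by simp
  hence "besselI \<nu> \<kappa> = Re L / (2 * pi)" unfolding besselI_def A_def by (simp add: sums_iff)
  hence "Re L = 2 * pi * besselI \<nu> \<kappa>" by simp
  thus ?thesis using Lr unfolding L_def E_def by simp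
qed



definition Sfun :: "complex \<Rightarrow> complex" where
  "Sfun z = (if z = 0 then of_real pi else sin (of_real pi * z) / z)"

definition hfun :: "nat \<Rightarrow> nat \<Rightarrow> nat \<Rightarrow> complex \<Rightarrow> complex" where
  "hfun p k q z = (of_real pi / Sfun z) ^ p * cos (of_real pi * z) ^ k * (1 - z) ^ q"

definition Gfun :: "complex \<Rightarrow> complex" where
  "Gfun z = (if z = 0 then 0 else r_fun (- z))"

definition Nf :: "complex \<Rightarrow> complex" where
  "Nf z = z * sin (of_real pi * z) - sin (of_real pi * z) + of_real pi * (z - z^2) * cos (of_real pi * z)"

lemma S_hol: "Sfun holomorphic_on UNIV"
proof -
  have "(\<lambda>z. if z = 0 then deriv (\<lambda>z. sin (of_real pi * z)) 0
                else (sin (of_real pi * z) - sin (of_real pi * 0)) / (z - 0)) holomorphic_on UNIV"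
    by (rule pole_lemma) (auto intro: holomorphic_intros)
  moreover have "deriv (\<lambda>z::complex. sin (of_real pi * z)) 0 = of_real pi"
    by (rule DERIV_imp_deriv) (auto intro!: derivative_eq_intros)
  ultimately show ?thesis
    by (elim holomorphic_transform) (simp add: Sfun_def)
qed

lemma notint: fixes z :: complex assumes "norm z < 1" "z \<noteq> 0" shows "z \<notin> \<int>"
proof
  assume "z \<in> \<int>"
  then obtain m where m: "z = of_int m" by (auto elim: Ints_cases)
  hence "\<bar>real_of_int m\<bar> < 1" using assms(1) by simp
  hence "\<bar>m\<bar> < 1" by linarith
  hence "m = 0" by simp
  thus False using m assms(2) by simp
qed

lemma sin_nz: fixes z :: complex assumes "norm z < 1" "z \<noteq> 0" shows "sin (of_real pi * z) \<noteq> 0"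
proof
  assume "sin (of_real pi * z) = 0"
  then obtain m :: int where "of_real pi * z = of_real (of_int m * pi)" by (auto simp: sin_eq_0)
  hence "z = of_int m" by (simp add: mult.commute)
  thus False using notint[OF assms] by simp
qed

lemma S_nz: "norm z < 1 \<Longrightarrow> Sfun z \<noteq> 0"
  unfolding Sfun_def using sin_nz by auto

lemma h_hol: "hfun p k q holomorphic_on ball 0 1"
proof -
  have "Sfun holomorphic_on ball 0 1" using S_hol by (rule holomorphic_on_subset) auto
  thus ?thesis unfolding hfun_def using S_nz by (auto intro!: holomorphic_intros)
qed

lemma phi_eq:
  assumes "norm z < 1"
  shows "phi_tilde n k1 k2 R z = exp (R * Gfun z) * hfun (n + k1) k1 (n + k1 + k2) z"
proof (cases "z = 0")
  case True thus ?thesis by (simp add: phi_tilde_def Gfun_def hfun_def Sfun_def)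
next
  case False
  have ni: "z \<notin> \<int>" using notint[OF assms False] .
  have e: "(of_real pi * z) ^ (n + k1) / sin (of_real pi * z) ^ (n + k1) = (of_real pi / Sfun z) ^ (n + k1)"
    using False by (simp add: Sfun_def power_divide field_simps)
  have "phi_tilde n k1 k2 R z = exp (R * r_fun (- z)) * ((of_real pi * z) ^ (n + k1) / sin (of_real pi * z) ^ (n + k1))
         * cos (of_real pi * z) ^ k1 * (1 - z) ^ (n + k1 + k2)"
    using False ni unfolding phi_tilde_def by (simp add: field_simps)
  thus ?thesis unfolding e Gfun_def hfun_def using False by simp
qed

lemma norm3: "norm (a + b - c) \<le> norm a + norm b + norm (c::'a::real_normed_vector)"
  using norm_triangle_ineq4[of "a+b" c] norm_triangle_ineq[of a b] by linarith

lemma G_formula1: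
  assumes "norm z < 1" "z \<noteq> 0"
  shows "Gfun z = 1 - 1 / z + of_real pi * (1 - z) * cos (of_real pi * z) / sin (of_real pi * z)"
proof -
  have "- z \<notin> \<int>" using notint[OF assms] by (metis Ints_minus minus_minus)
  thus ?thesis using assms unfolding Gfun_def r_fun_def cot_def
    by simp
qed

lemma G_formula2:
  assumes "norm z < 1" "z \<noteq> 0"
  shows "Gfun z = Nf z / (z ^ 2 * Sfun z)"
proof -
  have s: "sin (of_real pi * z) \<noteq> 0" using sin_nz[OF assms] .
  have Q: "z ^ 2 * Sfun z = z * sin (of_real pi * z)" using assms(2) by (simp add: Sfun_def power2_eq_square)
  show ?thesis unfolding G_formula1[OF assms] Nf_def Q using s assms(2)
    by (simp add: divide_simps power2_eq_square) (simp add: algebra_simps)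
qed

lemma N_bound:
  assumes "norm z \<le> 1"
  shows "norm (Nf z) \<le> (2 * (exp pi * pi ^ 3 / 2) + 2 * pi * (exp pi * pi ^ 3 / 2) + pi ^ 3) * norm z ^ 3"
proof -
  define w where "w = of_real pi * z"
  define c where "c = exp pi * pi ^ 3 / 2"
  have nw: "norm w = pi * norm z" unfolding w_def by (simp add: norm_mult)
  have nw1: "norm w \<le> pi" using assms nw by (simp add: mult_left_le_one_le)
  have imw: "\<bar>Im w\<bar> \<le> pi" using abs_Im_le_cmod[of w] nw1 by linarith
  define Es where "Es = sin w - w"
  define Ec where "Ec = cos w - (1 - w ^ 2 / 2)"
  have sEs: "(\<Sum>k\<le>2. complex_of_real (sin_coeff k) * w ^ k) = w"
    by (simp add: sin_coeff_def eval_nat_numeral)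
  have sEc: "(\<Sum>k\<le>2. complex_of_real (cos_coeff k) * w ^ k) = 1 - w ^ 2 / 2"
    by (simp add: cos_coeff_def eval_nat_numeral)
  have bE: "exp \<bar>Im w\<bar> * norm w ^ Suc 2 / fact 2 \<le> c * norm z ^ 3"
  proof -
    have "exp \<bar>Im w\<bar> \<le> exp pi" using imw by simp
    moreover have "norm w ^ Suc 2 = pi ^ 3 * norm z ^ 3" by (simp add: nw power_mult_distrib)
    ultimately show ?thesis unfolding c_def
      by (simp add: mult_right_mono mult.assoc)
  qed
  have Es_b: "norm Es \<le> c * norm z ^ 3"
    using Taylor_sin[of w 2] bE unfolding sEs Es_def by linarith
  have Ec_b: "norm Ec \<le> c * norm z ^ 3"
    using Taylor_cos[of w 2] bE unfolding sEc Ec_def by linarith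
  have id: "Nf z = (z - 1) * Es + of_real pi * (z - z ^ 2) * Ec - of_real pi ^ 3 * (z - z ^ 2) * z ^ 2 / 2"
    unfolding Nf_def Es_def Ec_def w_def by (simp add: algebra_simps power2_eq_square power3_eq_cube)
  have n1: "norm (z - 1) \<le> 2" using norm_triangle_ineq4[of z 1] assms by simp
  have n2: "norm (z - z ^ 2) \<le> 2 * norm z"
  proof -
    have "z - z ^ 2 = z * (1 - z)" by (simp add: algebra_simps power2_eq_square)
    hence "norm (z - z ^ 2) = norm z * norm (1 - z)" by (simp add: norm_mult)
    also have "\<dots> \<le> norm z * 2" using n1 by (intro mult_left_mono) (auto simp: norm_minus_commute)
    finally show ?thesis by simp
  qed
  have A0: "norm (Nf z) \<le> norm ((z - 1) * Es) + norm (of_real pi * (z - z ^ 2) * Ec) + norm (of_real pi ^ 3 * (z - z ^ 2) * z ^ 2 / 2)"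
    unfolding id by (rule norm3)
  have A1: "norm ((z - 1) * Es) \<le> 2 * (c * norm z ^ 3)"
    unfolding norm_mult by (rule mult_mono[OF n1 Es_b]) auto
  have A2: "norm (of_real pi * (z - z ^ 2) * Ec) \<le> pi * (2 * norm z) * (c * norm z ^ 3)"
    unfolding norm_mult norm_of_real using n2 Ec_b pi_gt_zero
    by (intro mult_mono) auto
  have A3: "norm (of_real pi ^ 3 * (z - z ^ 2) * z ^ 2 / 2) \<le> pi ^ 3 * (2 * norm z) * norm z ^ 2 / 2"
  proof -
    have "norm (of_real pi ^ 3 * (z - z ^ 2) * z ^ 2 / 2) = pi ^ 3 * norm (z - z ^ 2) * norm z ^ 2 / 2"
      using pi_gt_zero by (simp add: norm_mult norm_divide norm_power)
    also have "\<dots> \<le> pi ^ 3 * (2 * norm z) * norm z ^ 2 / 2"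
      using n2 pi_gt_zero by (intro divide_right_mono mult_right_mono mult_left_mono) auto
    finally show ?thesis .
  qed
  have "norm (Nf z) \<le> 2 * (c * norm z ^ 3) + pi * (2 * norm z) * (c * norm z ^ 3) + pi ^ 3 * (2 * norm z) * norm z ^ 2 / 2"
    using A0 A1 A2 A3 by linarith
  also have "\<dots> \<le> 2 * (c * norm z ^ 3) + pi * 2 * (c * norm z ^ 3) + pi ^ 3 * norm z ^ 3"
  proof -
    have "0 \<le> c" unfolding c_def by simp
    hence "pi * (2 * norm z) * (c * norm z ^ 3) \<le> pi * 2 * (c * norm z ^ 3)"
      using assms pi_gt_zero by (simp add: mult_left_le_one_le mult.assoc mult_left_mono)
    moreover have "pi ^ 3 * (2 * norm z) * norm z ^ 2 / 2 = pi ^ 3 * norm z ^ 3"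
      by (simp add: power2_eq_square power3_eq_cube)
    ultimately show ?thesis by linarith
  qed
  finally show ?thesis unfolding c_def by (simp add: algebra_simps)
qed

lemma S_lower: "\<exists>m>0. \<forall>z\<in>cball 0 (1/2). m \<le> norm (Sfun z)"
proof -
  have "continuous_on (cball 0 (1/2)) (\<lambda>z. norm (Sfun z))"
    using S_hol by (intro continuous_intros holomorphic_on_imp_continuous_on) (auto intro: holomorphic_on_subset)
  from continuous_attains_inf[OF compact_cball _ this]
  obtain x where x: "x \<in> cball 0 (1/2)" "\<forall>y\<in>cball 0 (1/2). norm (Sfun x) \<le> norm (Sfun y)" by auto
  have "Sfun x \<noteq> 0" using x(1) by (intro S_nz) auto
  thus ?thesis using x(2) by (intro exI[of _ "norm (Sfun x)"]) auto
qed

lemma G_bound: "\<exists>K\<ge>0. \<forall>z. norm z \<le> 1/2 \<longrightarrow> norm (Gfun z) \<le> K * norm z"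
proof -
  obtain m where m: "m > 0" "\<forall>z\<in>cball 0 (1/2). m \<le> norm (Sfun z)" using S_lower by blast
  define KN where "KN = (2 * (exp pi * pi ^ 3 / 2) + 2 * pi * (exp pi * pi ^ 3 / 2) + pi ^ 3)"
  have KN: "KN \<ge> 0" unfolding KN_def by simp
  have "norm (Gfun z) \<le> KN / m * norm z" if z: "norm z \<le> 1/2" for z
  proof (cases "z = 0")
    case True thus ?thesis by (simp add: Gfun_def)
  next
    case False
    have z1: "norm z < 1" using z by simp
    have Sm: "m \<le> norm (Sfun z)" using m z by auto
    have "norm (Gfun z) = norm (Nf z) / (norm z ^ 2 * norm (Sfun z))"
      unfolding G_formula2[OF z1 False] by (simp add: norm_mult norm_divide norm_power)
    also have "\<dots> \<le> KN * norm z ^ 3 / (norm z ^ 2 * m)"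
      using N_bound[of z] z Sm m(1) False unfolding KN_def
      by (intro frac_le mult_left_mono mult_pos_pos) auto
    also have "\<dots> = KN / m * norm z" using False by (simp add: power2_eq_square power3_eq_cube)
    finally show ?thesis .
  qed
  thus ?thesis using KN m(1) by (intro exI[of _ "KN / m"]) auto
qed

lemma G_hol: "Gfun holomorphic_on ball 0 1"
proof (rule no_isolated_singularity'[where K="{0}"])
  show "Gfun holomorphic_on (ball 0 1 - {0})"
  proof (rule holomorphic_transform[where f="\<lambda>z. 1 - 1 / z + of_real pi * (1 - z) * cos (of_real pi * z) / sin (of_real pi * z)"])
    show "(\<lambda>z. 1 - 1 / z + of_real pi * (1 - z) * cos (of_real pi * z) / sin (of_real pi * z)) holomorphic_on ball 0 1 - {0}"
      using sin_nz by (auto intro!: holomorphic_intros)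
    show "\<And>x. x \<in> ball 0 1 - {0} \<Longrightarrow> 1 - 1 / x + of_real pi * (1 - x) * cos (of_real pi * x) / sin (of_real pi * x) = Gfun x"
      using G_formula1 by auto
  qed
  obtain K where K: "K \<ge> 0" "\<forall>z. norm z \<le> 1/2 \<longrightarrow> norm (Gfun z) \<le> K * norm z" using G_bound by blast
  have "(Gfun \<longlongrightarrow> 0) (at 0 within ball 0 1)"
  proof (rule Lim_null_comparison)
    show "\<forall>\<^sub>F x in at 0 within ball 0 1. norm (Gfun x) \<le> K * norm x"
      unfolding eventually_at using K by (intro exI[of _ "1/2"]) (auto simp: dist_norm)
    have "((\<lambda>x::complex. K * norm x) \<longlongrightarrow> K * norm (0::complex)) (at 0 within ball 0 1)"
      by (intro tendsto_intros)
    thus "((\<lambda>x::complex. K * norm x) \<longlongrightarrow> 0) (at 0 within ball 0 1)" by simp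
  qed
  thus "\<And>z. z \<in> {0} \<Longrightarrow> (Gfun \<longlongrightarrow> Gfun z) (at z within ball 0 1)" by (simp add: Gfun_def)
qed auto



lemma taylor_rem:
  assumes hol: "f holomorphic_on ball 0 1"
  shows "\<exists>B\<ge>0. \<forall>z\<in>cball 0 (1/2). norm (f z - (\<Sum>i\<le>n. (deriv ^^ i) f 0 * z ^ i / fact i)) \<le> B * norm z ^ Suc n"
proof -
  have sub: "cball (0::complex) (1/2) \<subseteq> ball 0 1" by auto
  have "continuous_on (cball 0 (1/2)) ((deriv ^^ Suc n) f)"
    by (rule holomorphic_on_imp_continuous_on, rule holomorphic_on_subset[OF _ sub])
       (intro holomorphic_higher_deriv hol open_ball)
  hence "compact ((deriv ^^ Suc n) f ` cball 0 (1/2))" by (intro compact_continuous_image) auto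
  hence "bounded ((deriv ^^ Suc n) f ` cball 0 (1/2))" by (rule compact_imp_bounded)
  then obtain Bd where Bd: "Bd > 0" "\<forall>x\<in>(deriv ^^ Suc n) f ` cball 0 (1/2). norm x \<le> Bd"
    unfolding bounded_pos by blast
  have "norm (f z - (\<Sum>i\<le>n. (deriv ^^ i) f 0 * z ^ i / fact i)) \<le> Bd * norm z ^ Suc n" if z: "z \<in> cball 0 (1/2)" for z
  proof -
    have "norm ((deriv ^^ 0) f z - (\<Sum>i\<le>n. (deriv ^^ i) f 0 * (z - 0) ^ i / fact i)) \<le> Bd * norm (z - 0) ^ Suc n / fact n"
    proof (rule complex_Taylor[of "cball 0 (1/2)" n "\<lambda>i. (deriv ^^ i) f" Bd 0 z])
      show "convex (cball (0::complex) (1/2))" by simp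
      fix i x assume "x \<in> cball (0::complex) (1/2)"
      hence "x \<in> ball 0 1" using sub by blast
      from has_field_derivative_higher_deriv[OF hol open_ball this, of i]
      show "((deriv ^^ i) f has_field_derivative (deriv ^^ Suc i) f x) (at x within cball 0 (1/2))"
        by (rule has_field_derivative_at_within)
    next
      show "\<And>x. x \<in> cball 0 (1/2) \<Longrightarrow> cmod ((deriv ^^ Suc n) f x) \<le> Bd" using Bd by auto
    qed (use z in auto)
    also have "\<dots> \<le> Bd * norm z ^ Suc n"
      using divide_left_mono[of 1 "fact n" "Bd * norm z ^ Suc n"] Bd(1) fact_ge_1[of n]
      by simp
    finally show ?thesis by simp
  qed
  thus ?thesis using Bd(1) by (intro exI[of _ Bd]) auto
qed

lemma deriv_vanish:
  assumes hol: "f holomorphic_on ball 0 1" and \<rho>: "\<rho> > 0"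
    and b: "\<And>z. norm z < \<rho> \<Longrightarrow> norm (f z) \<le> B * norm z ^ m" and km: "k < m"
  shows "(deriv ^^ k) f 0 = 0"
proof (cases "k = 0")
  case True
  have "m \<noteq> 0" using km by simp
  hence "norm (f 0) \<le> 0" using b[of 0] \<rho> by (simp add: power_0_left)
  thus ?thesis using True by simp
next
  case False
  define d where "d = (deriv ^^ k) f 0"
  define C where "C = fact k * (\<bar>B\<bar> + 1)"
  have C: "C > 0" unfolding C_def by (simp add: add_pos_nonneg)
  have bnd: "norm d \<le> C * r" if r: "0 < r" "r < min \<rho> (1/2)" for r
  proof -
    have sub: "cball (0::complex) r \<subseteq> ball 0 1" using r by auto
    have "norm d \<le> fact k * ((\<bar>B\<bar> + 1) * r ^ m) / r ^ k"
      unfolding d_def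
    proof (rule Cauchy_higher_deriv_bound[where y=0])
      show "f holomorphic_on ball 0 r" using hol by (rule holomorphic_on_subset) (use sub in auto)
      show "continuous_on (cball 0 r) f" using holomorphic_on_imp_continuous_on[OF hol] sub
        by (rule continuous_on_subset)
      show "0 < r" "0 < k" using r False by auto
      fix w :: complex assume "w \<in> ball 0 r"
      hence w: "norm w < r" by simp
      have "norm (f w) \<le> B * norm w ^ m" using b w r by simp
      also have "\<dots> \<le> \<bar>B\<bar> * r ^ m" using w by (intro mult_mono power_mono) auto
      also have "\<dots> < (\<bar>B\<bar> + 1) * r ^ m" using r by (simp add: distrib_right)
      finally show "f w \<in> ball 0 ((\<bar>B\<bar> + 1) * r ^ m)" by simp
    qed
    also have "\<dots> = C * r ^ (m - k)"
      using r km unfolding C_def by (simp add: power_diff)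
    also have "\<dots> \<le> C * r"
    proof -
      have "r ^ (m - k) \<le> r ^ 1" using r km by (intro power_decreasing) auto
      thus ?thesis using C by simp
    qed
    finally show ?thesis .
  qed
  show ?thesis
  proof (rule ccontr)
    assume "(deriv ^^ k) f 0 \<noteq> 0"
    hence nd: "norm d > 0" unfolding d_def by simp
    define r where "r = min (min \<rho> (1/2) / 2) (norm d / (2 * C))"
    have r: "0 < r" "r < min \<rho> (1/2)" unfolding r_def using \<rho> nd C by auto
    have "C * r \<le> C * (norm d / (2 * C))" using C unfolding r_def by (intro mult_left_mono) auto
    also have "\<dots> = norm d / 2" using C by simp
    finally show False using bnd[OF r] nd by simp
  qed
qed

lemma higher_deriv_sum:
  assumes "finite I" "\<And>i. i \<in> I \<Longrightarrow> f i holomorphic_on S" "open S" "z \<in> S"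
  shows "(deriv ^^ k) (\<lambda>w. \<Sum>i\<in>I. f i w) z = (\<Sum>i\<in>I. (deriv ^^ k) (f i) z)"
  using assms(1,2)
proof (induction I rule: finite_induct)
  case empty thus ?case by simp
next
  case (insert a I)
  have "(deriv ^^ k) (\<lambda>w. \<Sum>i\<in>insert a I. f i w) z = (deriv ^^ k) (\<lambda>w. f a w + (\<Sum>i\<in>I. f i w)) z"
    using insert.hyps by simp
  also have "\<dots> = (deriv ^^ k) (f a) z + (deriv ^^ k) (\<lambda>w. \<Sum>i\<in>I. f i w) z"
    using insert.prems assms(3,4) by (intro higher_deriv_add holomorphic_on_sum) auto
  finally show ?case using insert by simp
qed

lemma higher_deriv_monomial:
  "(deriv ^^ k) (\<lambda>w::complex. w ^ j) 0 = (if j = k then fact k else 0)"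
proof -
  have "(deriv ^^ k) (\<lambda>w::complex. (w - 0) ^ j) 0 = pochhammer (of_nat (Suc j - k)) k * (0 - 0) ^ (j - k)"
    by (rule higher_deriv_power)
  moreover have "pochhammer (of_nat (Suc j - k)) k * (0 - 0::complex) ^ (j - k) = (if j = k then fact k else 0)"
  proof (cases "j = k")
    case True thus ?thesis by (simp add: pochhammer_fact)
  next
    case False
    show ?thesis
    proof (cases "j < k")
      case True
      hence "Suc j - k = 0" by simp
      thus ?thesis using True False by (simp add: pochhammer_0_left)
    next
      case False2: False
      thus ?thesis using False by simp
    qed
  qed
  ultimately show ?thesis by simp
qed

lemma poly_deriv:
  "(deriv ^^ k) (\<lambda>R::complex. \<Sum>j\<le>K. c j * R ^ j) 0 = (if k \<le> K then fact k * c k else 0)"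
proof -
  have "(deriv ^^ k) (\<lambda>R::complex. \<Sum>j\<le>K. c j * R ^ j) 0 = (\<Sum>j\<le>K. (deriv ^^ k) (\<lambda>R. c j * R ^ j) 0)"
    by (rule higher_deriv_sum[where S=UNIV]) (auto intro!: holomorphic_intros)
  also have "\<dots> = (\<Sum>j\<le>K. c j * (if j = k then fact k else 0))"
    by (rule sum.cong[OF refl], subst higher_deriv_cmult[where A=UNIV])
       (auto intro!: holomorphic_intros simp: higher_deriv_monomial)
  also have "\<dots> = (if k \<le> K then fact k * c k else 0)"
    by (simp add: if_distrib mult.commute cong: if_cong)
  finally show ?thesis .
qed



lemma hol_bounded:
  assumes "f holomorphic_on ball 0 1"
  shows "\<exists>B\<ge>0. \<forall>z\<in>cball 0 (1/2). norm (f z) \<le> B"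
proof -
  have sub: "cball (0::complex) (1/2) \<subseteq> ball 0 1" by auto
  have "continuous_on (cball 0 (1/2)) f"
    by (rule holomorphic_on_imp_continuous_on, rule holomorphic_on_subset[OF assms sub])
  hence "compact (f ` cball 0 (1/2))" by (intro compact_continuous_image) auto
  hence "bounded (f ` cball 0 (1/2))" by (rule compact_imp_bounded)
  then obtain B where "B > 0" "\<forall>x\<in>f ` cball 0 (1/2). norm x \<le> B"
    unfolding bounded_pos by blast
  thus ?thesis by (intro exI[of _ B]) auto
qed

lemma phi_deriv_eq:
  "phi_deriv n k1 k2 a1 a2 = (deriv ^^ a2) (\<lambda>z. hfun (n+k1) k1 (n+k1+k2) z * Gfun z ^ a1) 0"
proof -
  define hh where "hh = hfun (n+k1) k1 (n+k1+k2)"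
  define f where "f = (\<lambda>j z. hh z * Gfun z ^ j)"
  have hh_hol: "hh holomorphic_on ball 0 1" unfolding hh_def by (rule h_hol)
  have f_hol: "f j holomorphic_on ball 0 1" for j
    unfolding f_def using hh_hol G_hol by (intro holomorphic_intros)
  obtain KG where KG: "KG \<ge> 0" "\<And>z. norm z \<le> 1/2 \<Longrightarrow> norm (Gfun z) \<le> KG * norm z"
    using G_bound by blast
  obtain Hm where Hm: "Hm \<ge> 0" "\<And>z. z \<in> cball 0 (1/2) \<Longrightarrow> norm (hh z) \<le> Hm"
    using hol_bounded[OF hh_hol] by blast
  have stepB: "(deriv ^^ a2) (f j) 0 = 0" if "a2 < j" for j
  proof (rule deriv_vanish[OF f_hol _ _ that])
    show "(0::real) < 1/2" by simp
    fix z :: complex assume z: "norm z < 1/2"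
    have "norm (f j z) = norm (hh z) * norm (Gfun z) ^ j" unfolding f_def by (simp add: norm_mult norm_power)
    also have "\<dots> \<le> Hm * (KG * norm z) ^ j"
      using Hm KG z by (intro mult_mono power_mono) auto
    finally show "norm (f j z) \<le> (Hm * KG ^ j) * norm z ^ j" by (simp add: power_mult_distrib mult.assoc)
  qed
  have stepA: "(deriv ^^ a2) (\<lambda>\<xi>. phi_tilde n k1 k2 R \<xi>) 0 = (\<Sum>j\<le>a2. ((deriv ^^ a2) (f j) 0 / fact j) * R ^ j)" for R
  proof -
    define E where "E = (\<lambda>z. hh z * (exp (R * Gfun z) - (\<Sum>j\<le>a2. (R * Gfun z) ^ j / fact j)))"
    have E_hol: "E holomorphic_on ball 0 1" unfolding E_def using hh_hol G_hol
      by (intro holomorphic_intros) (simp_all add: fact_nonzero)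
    have term_hol: "(\<lambda>z. (R ^ j / fact j) * f j z) holomorphic_on ball 0 1" for j
      by (intro holomorphic_on_mult holomorphic_on_const f_hol)
    have sum_hol: "(\<lambda>z. \<Sum>j\<le>a2. (R ^ j / fact j) * f j z) holomorphic_on ball 0 1"
      by (intro holomorphic_on_sum holomorphic_on_mult holomorphic_on_const f_hol)
    have "(deriv ^^ a2) (\<lambda>\<xi>. phi_tilde n k1 k2 R \<xi>) 0 = (deriv ^^ a2) (\<lambda>z. (\<Sum>j\<le>a2. (R ^ j / fact j) * f j z) + E z) 0"
    proof (rule higher_deriv_cong_ev[OF _ refl])
      have "eventually (\<lambda>z. z \<in> ball (0::complex) 1) (nhds 0)" by (intro eventually_nhds_in_open) auto
      thus "\<forall>\<^sub>F x in nhds 0. phi_tilde n k1 k2 R x = (\<Sum>j\<le>a2. R ^ j / fact j * f j x) + E x"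
      proof (rule eventually_mono)
        fix z :: complex assume "z \<in> ball 0 1"
        hence "phi_tilde n k1 k2 R z = exp (R * Gfun z) * hh z" using phi_eq[of z] unfolding hh_def by simp
        also have "\<dots> = hh z * (\<Sum>j\<le>a2. (R * Gfun z) ^ j / fact j) + E z" unfolding E_def by (simp add: algebra_simps)
        also have "hh z * (\<Sum>j\<le>a2. (R * Gfun z) ^ j / fact j) = (\<Sum>j\<le>a2. R ^ j / fact j * f j z)"
          unfolding f_def sum_distrib_left by (rule sum.cong[OF refl]) (simp add: power_mult_distrib)
        finally show "phi_tilde n k1 k2 R z = (\<Sum>j\<le>a2. R ^ j / fact j * f j z) + E z" .
      qed
    qed
    also have "\<dots> = (deriv ^^ a2) (\<lambda>z. \<Sum>j\<le>a2. (R ^ j / fact j) * f j z) 0 + (deriv ^^ a2) E 0"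
      by (rule higher_deriv_add[OF sum_hol E_hol]) auto
    also have "(deriv ^^ a2) (\<lambda>z. \<Sum>j\<le>a2. (R ^ j / fact j) * f j z) 0 = (\<Sum>j\<le>a2. (deriv ^^ a2) (\<lambda>z. (R ^ j / fact j) * f j z) 0)"
      by (intro higher_deriv_sum[where S="ball 0 1"] finite_atMost term_hol open_ball) simp
    also have "\<dots> = (\<Sum>j\<le>a2. ((deriv ^^ a2) (f j) 0 / fact j) * R ^ j)"
      by (rule sum.cong[OF refl], subst higher_deriv_cmult[OF f_hol _ open_ball]) auto
    also have "(deriv ^^ a2) E 0 = 0"
    proof (rule deriv_vanish[OF E_hol, where m="Suc a2"])
      show "(0::real) < 1/2" by simp
      show "a2 < Suc a2" by simp
      fix z :: complex assume z: "norm z < 1/2"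
      define w where "w = R * Gfun z"
      have nw: "norm w \<le> norm R * KG * norm z" unfolding w_def norm_mult using KG z
        by (simp add: mult.assoc mult_left_mono)
      have nw2: "norm w \<le> norm R * KG / 2"
      proof -
        have "norm R * KG * norm z \<le> norm R * KG * (1/2)" by (rule mult_left_mono) (use z KG in auto)
        thus ?thesis using nw by linarith
      qed
      have "norm (E z) = norm (hh z) * norm (exp w - (\<Sum>j\<le>a2. w ^ j / fact j))"
        unfolding E_def w_def by (simp add: norm_mult)
      also have "\<dots> \<le> Hm * (exp (norm w) * norm w ^ Suc a2 / fact a2)"
        by (rule mult_mono[OF Hm(2) Taylor_exp_field]) (use z Hm in auto)
      also have "\<dots> \<le> Hm * (exp (norm R * KG / 2) * (norm R * KG * norm z) ^ Suc a2)"
      proof (intro mult_left_mono Hm(1))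
        have "exp (norm w) * norm w ^ Suc a2 / fact a2 \<le> exp (norm w) * norm w ^ Suc a2"
          using divide_left_mono[of 1 "fact a2" "exp (norm w) * norm w ^ Suc a2"] fact_ge_1[of a2] by simp
        also have "\<dots> \<le> exp (norm R * KG / 2) * (norm R * KG * norm z) ^ Suc a2"
        proof -
          have "exp (norm w) \<le> exp (norm R * KG / 2)" using nw2 by simp
          moreover have "norm w ^ Suc a2 \<le> (norm R * KG * norm z) ^ Suc a2" by (rule power_mono[OF nw]) simp
          ultimately show ?thesis by (rule mult_mono) auto
        qed
        finally show "exp (norm w) * norm w ^ Suc a2 / fact a2 \<le> exp (norm R * KG / 2) * (norm R * KG * norm z) ^ Suc a2" .
      qed
      finally show "norm (E z) \<le> (Hm * exp (norm R * KG / 2) * (norm R * KG) ^ Suc a2) * norm z ^ Suc a2"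
        by (simp add: power_mult_distrib mult_ac)
    qed
    finally show ?thesis by simp
  qed
  have "phi_deriv n k1 k2 a1 a2 = (deriv ^^ a1) (\<lambda>R. \<Sum>j\<le>a2. ((deriv ^^ a2) (f j) 0 / fact j) * R ^ j) 0"
    unfolding phi_deriv_def stepA ..
  also have "\<dots> = (if a1 \<le> a2 then fact a1 * ((deriv ^^ a2) (f a1) 0 / fact a1) else 0)"
    by (rule poly_deriv)
  also have "\<dots> = (deriv ^^ a2) (f a1) 0" using stepB[of a1] by auto
  finally show ?thesis unfolding f_def hh_def .
qed



lemma FT_bound:
  fixes N :: nat and C :: real
  assumes C: "C > 0"
  shows "\<exists>M0\<ge>0. \<forall>R \<xi>. norm \<xi> \<le> 1/2 \<longrightarrow> norm R \<le> C * norm \<xi> \<longrightarrow>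
     norm (exp (R * Gfun \<xi>) * hfun (n+k1) k1 (n+k1+k2) \<xi>
       - (\<Sum>a1\<le>N. \<Sum>a2\<le>N - a1. phi_deriv n k1 k2 a1 a2 * (R ^ a1 / fact a1) * (\<xi> ^ a2 / fact a2)))
     \<le> M0 * norm \<xi> ^ Suc N"
proof -
  define hh where "hh = hfun (n+k1) k1 (n+k1+k2)"
  define f where "f = (\<lambda>j z. hh z * Gfun z ^ j)"
  have hh_hol: "hh holomorphic_on ball 0 1" unfolding hh_def by (rule h_hol)
  have f_hol: "f j holomorphic_on ball 0 1" for j
    unfolding f_def using hh_hol G_hol by (intro holomorphic_intros)
  have d_eq: "phi_deriv n k1 k2 a1 a2 = (deriv ^^ a2) (f a1) 0" for a1 a2
    unfolding f_def hh_def by (rule phi_deriv_eq)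
  obtain KG where KG: "KG \<ge> 0" "\<And>z. norm z \<le> 1/2 \<Longrightarrow> norm (Gfun z) \<le> KG * norm z"
    using G_bound by blast
  obtain Hm where Hm: "Hm \<ge> 0" "\<And>z. z \<in> cball 0 (1/2) \<Longrightarrow> norm (hh z) \<le> Hm"
    using hol_bounded[OF hh_hol] by blast
  have "\<forall>j. \<exists>B\<ge>0. \<forall>z\<in>cball 0 (1/2). norm (f j z - (\<Sum>i\<le>N - j. (deriv ^^ i) (f j) 0 * z ^ i / fact i)) \<le> B * norm z ^ Suc (N - j)"
    using taylor_rem[OF f_hol] by blast
  from choice[OF this] obtain Bt where Bt': "\<forall>j. Bt j \<ge> 0 \<and> (\<forall>z\<in>cball 0 (1/2). norm (f j z - (\<Sum>i\<le>N - j. (deriv ^^ i) (f j) 0 * z ^ i / fact i)) \<le> Bt j * norm z ^ Suc (N - j))"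
    by blast
  hence Bt: "\<And>j. Bt j \<ge> 0"
    "\<And>j z. z \<in> cball 0 (1/2) \<Longrightarrow> norm (f j z - (\<Sum>i\<le>N - j. (deriv ^^ i) (f j) 0 * z ^ i / fact i)) \<le> Bt j * norm z ^ Suc (N - j)"
    by blast+
  define M0 where "M0 = (\<Sum>j\<le>N. C ^ j * Bt j) + Hm * exp (C * KG) * (C * KG) ^ Suc N"
  have M0: "M0 \<ge> 0" unfolding M0_def using Bt(1) Hm(1) KG(1) C by (intro add_nonneg_nonneg sum_nonneg) auto
  have "norm (exp (R * Gfun \<xi>) * hh \<xi>
       - (\<Sum>a1\<le>N. \<Sum>a2\<le>N - a1. phi_deriv n k1 k2 a1 a2 * (R ^ a1 / fact a1) * (\<xi> ^ a2 / fact a2)))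
     \<le> M0 * norm \<xi> ^ Suc N" if \<xi>: "norm \<xi> \<le> 1/2" and R: "norm R \<le> C * norm \<xi>" for R \<xi>
  proof -
    have \<xi>c: "\<xi> \<in> cball 0 (1/2)" using \<xi> by simp
    define w where "w = R * Gfun \<xi>"
    define X where "X = exp w - (\<Sum>j\<le>N. w ^ j / fact j)"
    define Y where "Y = (\<lambda>j. f j \<xi> - (\<Sum>i\<le>N - j. (deriv ^^ i) (f j) 0 * \<xi> ^ i / fact i))"
    have T_eq: "(\<Sum>a1\<le>N. \<Sum>a2\<le>N - a1. phi_deriv n k1 k2 a1 a2 * (R ^ a1 / fact a1) * (\<xi> ^ a2 / fact a2))
        = (\<Sum>j\<le>N. R ^ j / fact j * (\<Sum>i\<le>N - j. (deriv ^^ i) (f j) 0 * \<xi> ^ i / fact i))"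
      unfolding d_eq sum_distrib_left by (intro sum.cong refl) (simp add: divide_inverse mult_ac)
    have F_eq: "exp (R * Gfun \<xi>) * hh \<xi> = (\<Sum>j\<le>N. R ^ j / fact j * f j \<xi>) + hh \<xi> * X"
    proof -
      have "exp (R * Gfun \<xi>) * hh \<xi> = hh \<xi> * (\<Sum>j\<le>N. w ^ j / fact j) + hh \<xi> * X"
        unfolding X_def w_def by (simp add: algebra_simps)
      also have "hh \<xi> * (\<Sum>j\<le>N. w ^ j / fact j) = (\<Sum>j\<le>N. R ^ j / fact j * f j \<xi>)"
        unfolding sum_distrib_left f_def w_def by (intro sum.cong refl) (simp add: power_mult_distrib divide_inverse mult_ac)
      finally show ?thesis .
    qed
    have diff_eq: "exp (R * Gfun \<xi>) * hh \<xi> - (\<Sum>a1\<le>N. \<Sum>a2\<le>N - a1. phi_deriv n k1 k2 a1 a2 * (R ^ a1 / fact a1) * (\<xi> ^ a2 / fact a2))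
        = (\<Sum>j\<le>N. R ^ j / fact j * Y j) + hh \<xi> * X"
      unfolding F_eq T_eq Y_def by (simp add: sum_subtractf[symmetric] right_diff_distrib)
    have b1: "norm (R ^ j / fact j * Y j) \<le> C ^ j * Bt j * norm \<xi> ^ Suc N" if j: "j \<le> N" for j
    proof -
      have "norm (R ^ j / fact j * Y j) = norm R ^ j / fact j * norm (Y j)"
        by (simp add: norm_mult norm_divide norm_power)
      also have "\<dots> \<le> norm R ^ j * norm (Y j)"
        using divide_left_mono[of 1 "fact j" "norm R ^ j"] fact_ge_1[of j]
        by (intro mult_right_mono) auto
      also have "\<dots> \<le> (C * norm \<xi>) ^ j * (Bt j * norm \<xi> ^ Suc (N - j))"
        using Bt(2)[OF \<xi>c, of j] R C unfolding Y_def by (intro mult_mono power_mono) auto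
      also have "\<dots> = C ^ j * Bt j * (norm \<xi> ^ j * norm \<xi> ^ Suc (N - j))"
        by (simp add: power_mult_distrib mult_ac)
      also have "norm \<xi> ^ j * norm \<xi> ^ Suc (N - j) = norm \<xi> ^ Suc N"
        using j by (simp add: power_add[symmetric])
      finally show ?thesis .
    qed
    have b2: "norm (hh \<xi> * X) \<le> Hm * exp (C * KG) * (C * KG) ^ Suc N * norm \<xi> ^ Suc N"
    proof -
      have nG: "norm (Gfun \<xi>) \<le> KG"
      proof -
        have "KG * norm \<xi> \<le> KG * 1" using \<xi> KG(1) by (intro mult_left_mono) auto
        thus ?thesis using KG(2)[OF \<xi>] by linarith
      qed
      have nw: "norm w \<le> C * KG * norm \<xi>"
      proof -
        have "norm w = norm R * norm (Gfun \<xi>)" unfolding w_def by (simp add: norm_mult)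
        also have "\<dots> \<le> (C * norm \<xi>) * KG" using R nG C by (intro mult_mono) auto
        finally show ?thesis by (simp add: mult_ac)
      qed
      have nw1: "norm w \<le> C * KG"
      proof -
        have "C * KG * norm \<xi> \<le> C * KG * 1" using \<xi> C KG(1) by (intro mult_left_mono) auto
        thus ?thesis using nw by simp
      qed
      have "norm X \<le> exp (norm w) * norm w ^ Suc N / fact N" unfolding X_def by (rule Taylor_exp_field)
      also have "\<dots> \<le> exp (norm w) * norm w ^ Suc N"
        using divide_left_mono[of 1 "fact N" "exp (norm w) * norm w ^ Suc N"] fact_ge_1[of N] by simp
      also have "\<dots> \<le> exp (C * KG) * (C * KG * norm \<xi>) ^ Suc N"
      proof -
        have "exp (norm w) \<le> exp (C * KG)" using nw1 by simp
        moreover have "norm w ^ Suc N \<le> (C * KG * norm \<xi>) ^ Suc N" by (rule power_mono[OF nw]) simp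
        ultimately show ?thesis by (rule mult_mono) auto
      qed
      finally have nX: "norm X \<le> exp (C * KG) * (C * KG * norm \<xi>) ^ Suc N" .
      have "norm (hh \<xi> * X) = norm (hh \<xi>) * norm X" by (simp add: norm_mult)
      also have "\<dots> \<le> Hm * (exp (C * KG) * (C * KG * norm \<xi>) ^ Suc N)"
        using Hm(2)[OF \<xi>c] Hm(1) nX by (intro mult_mono) auto
      finally show ?thesis by (simp add: power_mult_distrib mult_ac)
    qed
    have "norm ((\<Sum>j\<le>N. R ^ j / fact j * Y j) + hh \<xi> * X) \<le> (\<Sum>j\<le>N. norm (R ^ j / fact j * Y j)) + norm (hh \<xi> * X)"
      by (rule order_trans[OF norm_triangle_ineq]) (simp add: norm_sum)
    also have "\<dots> \<le> (\<Sum>j\<le>N. C ^ j * Bt j * norm \<xi> ^ Suc N) + Hm * exp (C * KG) * (C * KG) ^ Suc N * norm \<xi> ^ Suc N"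
      using b1 b2 by (intro add_mono sum_mono) auto
    also have "\<dots> = M0 * norm \<xi> ^ Suc N" unfolding M0_def by (simp add: sum_distrib_right distrib_right)
    finally show ?thesis using diff_eq by simp
  qed
  thus ?thesis using M0 unfolding hh_def by blast
qed



lemma aux_coef:
  fixes D :: complex and k d p I :: real
  shows "D * (of_real (k * d / 2) ^ a1 / fact a1) * (of_real d ^ a2 / fact a2) * of_real (2 * p * I)
       = 2 * of_real p * (of_real I * D * of_real (k ^ a1 / (2 ^ a1 * fact a1 * fact a2)) * of_real (d ^ (a1 + a2)))"
proof -
  have r: "((k * d / 2) ^ a1 / fact a1) * (d ^ a2 / fact a2) * (2 * p * I) = 2 * p * (I * (k ^ a1 / (2 ^ a1 * fact a1 * fact a2)) * d ^ (a1 + a2))"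
    by (simp add: power_mult_distrib power_divide power_add)
  have "D * (of_real (k * d / 2) ^ a1 / fact a1) * (of_real d ^ a2 / fact a2) * of_real (2 * p * I)
      = D * of_real (((k * d / 2) ^ a1 / fact a1) * (d ^ a2 / fact a2) * (2 * p * I))"
    by (simp only: of_real_mult of_real_divide of_real_power of_real_fact mult.assoc)
  also have "\<dots> = D * of_real (2 * p * (I * (k ^ a1 / (2 ^ a1 * fact a1 * fact a2)) * d ^ (a1 + a2)))"
    by (simp only: r)
  also have "\<dots> = 2 * of_real p * (of_real I * D * of_real (k ^ a1 / (2 ^ a1 * fact a1 * fact a2)) * of_real (d ^ (a1 + a2)))"
    by (simp only: of_real_mult of_real_numeral mult_ac)
  finally show ?thesis .
qed

lemma aux_pt:
  fixes A B D P Y F d Z :: complex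
  assumes "B * Y = d * Z"
  shows "A * B * (D * P * (Y / F)) = D * P * (d / F) * (A * Z)"
proof -
  have "A * B * (D * P * (Y / F)) = (A * D * P / F) * (B * Y)" by (simp add: divide_inverse mult_ac)
  also have "\<dots> = (A * D * P / F) * (d * Z)" by (simp only: assms)
  also have "\<dots> = D * P * (d / F) * (A * Z)" by (simp add: divide_inverse mult_ac)
  finally show ?thesis .
qed

lemma norm_xi: "0 \<le> \<delta> \<Longrightarrow> norm (of_real \<delta> * exp (\<i> * of_real s)) = \<delta>"
  by (simp add: norm_mult)

lemma cont_comp:
  assumes "f holomorphic_on ball 0 1" "0 \<le> \<delta>" "\<delta> < 1"
  shows "continuous_on S (\<lambda>s. f (of_real \<delta> * exp (\<i> * of_real s)))"
proof -
  have c1: "continuous_on S (\<lambda>s::real. of_real \<delta> * exp (\<i> * of_real s))" by (intro continuous_intros)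
  have c2: "continuous_on (ball 0 1) f" by (rule holomorphic_on_imp_continuous_on[OF assms(1)])
  show ?thesis
    by (rule continuous_on_compose2[OF c2 c1]) (use assms(2,3) norm_xi in auto)
qed

lemma H_rewrite:
  assumes "0 < \<delta>" "\<delta> < 1"
  shows "H_int n k1 k2 \<kappa> \<delta> = integral {-pi..pi} (\<lambda>s.
     (exp (of_real (\<kappa> * cos s)) * exp (- \<i> * of_nat (n+k1-1) * of_real s)) *
     (exp (of_real (\<kappa> * \<delta> / 2) * Gfun (of_real \<delta> * exp (\<i> * of_real s))) *
      hfun (n+k1) k1 (n+k1+k2) (of_real \<delta> * exp (\<i> * of_real s))))"
  unfolding H_int_def Let_def
proof (rule integral_cong)
  fix s :: real
  define \<xi> where "\<xi> = (of_real \<delta> * exp (\<i> * of_real s) :: complex)"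
  have n\<xi>: "norm \<xi> < 1" "\<xi> \<noteq> 0" unfolding \<xi>_def using assms norm_xi[of \<delta> s] by auto
  have g: "r_fun (- \<xi>) = Gfun \<xi>" using n\<xi>(2) by (simp add: Gfun_def)
  have p: "phi_tilde n k1 k2 0 \<xi> = hfun (n+k1) k1 (n+k1+k2) \<xi>" using phi_eq[OF n\<xi>(1), of n k1 k2 0] by simp
  show "exp (of_real (\<kappa> * cos s) + of_real (\<kappa> * \<delta> / 2) * r_fun (- (of_real \<delta> * exp (\<i> * of_real s)))) *
        exp (- \<i> * of_nat (n + k1 - 1) * of_real s) * phi_tilde n k1 k2 0 (of_real \<delta> * exp (\<i> * of_real s)) =
        exp (of_real (\<kappa> * cos s)) * exp (- \<i> * of_nat (n + k1 - 1) * of_real s) *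
        (exp (of_real (\<kappa> * \<delta> / 2) * Gfun (of_real \<delta> * exp (\<i> * of_real s))) *
         hfun (n + k1) k1 (n + k1 + k2) (of_real \<delta> * exp (\<i> * of_real s)))"
    using g p unfolding \<xi>_def[symmetric] by (simp add: exp_add mult_ac)
qed

lemma T_integral:
  "integral {-pi..pi} (\<lambda>s.
     (exp (of_real (\<kappa> * cos s)) * exp (- \<i> * of_nat m * of_real s)) *
     (\<Sum>a1\<le>N. \<Sum>a2\<le>N - a1. D a1 a2 * (of_real (\<kappa> * \<delta> / 2) ^ a1 / fact a1) * ((of_real \<delta> * exp (\<i> * of_real s)) ^ a2 / fact a2)))
   = 2 * of_real pi * (\<Sum>a1\<le>N. \<Sum>a2\<le>N - a1.
                      of_real (besselI (int m - int a2) \<kappa>)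
                      * D a1 a2
                      * of_real (\<kappa> ^ a1 / (2 ^ a1 * fact a1 * fact a2))
                      * of_real (\<delta> ^ (a1 + a2)))"
proof -
  define \<Psi> where "\<Psi> = (\<lambda>a2 s. exp (of_real (\<kappa> * cos s)) * exp (- \<i> * of_int (int m - int a2) * of_real s))"
  define c where "c = (\<lambda>a1 a2. D a1 a2 * (of_real (\<kappa> * \<delta> / 2) ^ a1 / fact a1) * (of_real \<delta> ^ a2 / fact a2) :: complex)"
  have pt: "(exp (of_real (\<kappa> * cos s)) * exp (- \<i> * of_nat m * of_real s)) *
     (\<Sum>a1\<le>N. \<Sum>a2\<le>N - a1. D a1 a2 * (of_real (\<kappa> * \<delta> / 2) ^ a1 / fact a1) * ((of_real \<delta> * exp (\<i> * of_real s)) ^ a2 / fact a2))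
     = (\<Sum>a1\<le>N. \<Sum>a2\<le>N - a1. c a1 a2 * \<Psi> a2 s)" for s :: real
  proof -
    have e: "exp (- \<i> * of_nat m * of_real s) * exp (\<i> * of_real s) ^ a2 = exp (- \<i> * of_int (int m - int a2) * of_real s)" for a2
    proof -
      have "exp (- \<i> * of_nat m * of_real s) * exp (\<i> * of_real s) ^ a2 = exp (- \<i> * of_nat m * of_real s + of_nat a2 * (\<i> * of_real s))"
        by (simp only: exp_add exp_of_nat_mult)
      also have "- \<i> * of_nat m * of_real s + of_nat a2 * (\<i> * of_real s) = - \<i> * of_int (int m - int a2) * (of_real s :: complex)"
        by (simp add: algebra_simps)
      finally show ?thesis .
    qed
    show ?thesis unfolding sum_distrib_left c_def \<Psi>_def
    proof (intro sum.cong refl)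
      fix a1 a2
      have "exp (- \<i> * of_nat m * of_real s) * (of_real \<delta> * exp (\<i> * of_real s)) ^ a2 = of_real \<delta> ^ a2 * exp (- \<i> * of_int (int m - int a2) * of_real s)"
        using e[of a2] by (simp add: power_mult_distrib mult_ac)
      from aux_pt[OF this] show "exp (of_real (\<kappa> * cos s)) * exp (- \<i> * of_nat m * of_real s) *
         (D a1 a2 * (of_real (\<kappa> * \<delta> / 2) ^ a1 / fact a1) * ((of_real \<delta> * exp (\<i> * of_real s)) ^ a2 / fact a2)) =
         D a1 a2 * (of_real (\<kappa> * \<delta> / 2) ^ a1 / fact a1) * (of_real \<delta> ^ a2 / fact a2) *
         (exp (of_real (\<kappa> * cos s)) * exp (- \<i> * of_int (int m - int a2) * of_real s))" .
    qed
  qed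
  have intP: "\<Psi> a2 integrable_on {-pi..pi}" for a2
    unfolding \<Psi>_def by (intro integrable_continuous_interval continuous_intros)
  have "integral {-pi..pi} (\<lambda>s. \<Sum>a1\<le>N. \<Sum>a2\<le>N - a1. c a1 a2 * \<Psi> a2 s)
      = (\<Sum>a1\<le>N. \<Sum>a2\<le>N - a1. c a1 a2 * integral {-pi..pi} (\<Psi> a2))"
  proof -
    have "integral {-pi..pi} (\<lambda>s. \<Sum>a1\<le>N. \<Sum>a2\<le>N - a1. c a1 a2 * \<Psi> a2 s)
        = (\<Sum>a1\<le>N. integral {-pi..pi} (\<lambda>s. \<Sum>a2\<le>N - a1. c a1 a2 * \<Psi> a2 s))"
      using intP by (intro integral_sum finite_atMost integrable_sum integrable_on_mult_right) auto
    also have "\<dots> = (\<Sum>a1\<le>N. \<Sum>a2\<le>N - a1. integral {-pi..pi} (\<lambda>s. c a1 a2 * \<Psi> a2 s))"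
      using intP by (intro sum.cong refl integral_sum finite_atMost integrable_on_mult_right) auto
    finally show ?thesis by simp
  qed
  also have "\<dots> = (\<Sum>a1\<le>N. \<Sum>a2\<le>N - a1. c a1 a2 * of_real (2 * pi * besselI (int m - int a2) \<kappa>))"
    unfolding \<Psi>_def by (intro sum.cong refl) (simp only: bessel_integral)
  also have "\<dots> = 2 * of_real pi * (\<Sum>a1\<le>N. \<Sum>a2\<le>N - a1.
                      of_real (besselI (int m - int a2) \<kappa>)
                      * D a1 a2
                      * of_real (\<kappa> ^ a1 / (2 ^ a1 * fact a1 * fact a2))
                      * of_real (\<delta> ^ (a1 + a2)))"
    unfolding sum_distrib_left c_def
    by (intro sum.cong refl) (rule aux_coef)
  finally show ?thesis using pt by simp
qed



theorem lemma3p12: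
  fixes n k1 k2 :: nat and C :: real
  assumes "n \<ge> 1" and "C > 0"
  shows "\<forall>N::nat. \<exists>M>0. \<exists>d0>0. \<forall>delta kappa.
           0 < delta \<and> delta < 1 \<and> delta < d0 \<and> kappa \<in> {0..C} \<longrightarrow>
           norm (H_int n k1 k2 kappa delta
                 - 2 * of_real pi * (\<Sum>a1\<le>N. \<Sum>a2\<le>N - a1.
                      of_real (besselI (int (n + k1 - 1) - int a2) kappa)
                      * phi_deriv n k1 k2 a1 a2
                      * of_real (kappa ^ a1 / (2 ^ a1 * fact a1 * fact a2))
                      * of_real (delta ^ (a1 + a2))))
           \<le> M * delta ^ (N + 1)"
proof (intro allI)
  fix N :: nat
  from FT_bound[OF assms(2), of n k1 k2 N] obtain M0 where M0c: "M0 \<ge> 0 \<and> (\<forall>R \<xi>. norm \<xi> \<le> 1/2 \<longrightarrow> norm R \<le> C * norm \<xi> \<longrightarrow>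
     norm (exp (R * Gfun \<xi>) * hfun (n+k1) k1 (n+k1+k2) \<xi>
       - (\<Sum>a1\<le>N. \<Sum>a2\<le>N - a1. phi_deriv n k1 k2 a1 a2 * (R ^ a1 / fact a1) * (\<xi> ^ a2 / fact a2)))
     \<le> M0 * norm \<xi> ^ Suc N)" ..
  note M0 = conjunct1[OF M0c] conjunct2[OF M0c, rule_format]
  define M where "M = 2 * pi * exp C * M0 + 1"
  have Mpos: "M > 0" unfolding M_def using M0(1) by (simp add: add_nonneg_pos)
  have main: "norm (H_int n k1 k2 kappa delta
                 - 2 * of_real pi * (\<Sum>a1\<le>N. \<Sum>a2\<le>N - a1.
                      of_real (besselI (int (n + k1 - 1) - int a2) kappa)
                      * phi_deriv n k1 k2 a1 a2
                      * of_real (kappa ^ a1 / (2 ^ a1 * fact a1 * fact a2))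
                      * of_real (delta ^ (a1 + a2))))
           \<le> M * delta ^ (N + 1)"
    if H: "0 < delta" "delta < 1" "delta < 1/2" "kappa \<in> {0..C}" for delta kappa
  proof -
    define \<xi> where "\<xi> = (\<lambda>s::real. of_real delta * exp (\<i> * of_real s) :: complex)"
    define Rc where "Rc = (of_real (kappa * delta / 2) :: complex)"
    define \<Phi> where "\<Phi> = (\<lambda>s::real. exp (of_real (kappa * cos s)) * exp (- \<i> * of_nat (n+k1-1) * of_real s))"
    define F where "F = (\<lambda>s. exp (Rc * Gfun (\<xi> s)) * hfun (n+k1) k1 (n+k1+k2) (\<xi> s))"
    define T where "T = (\<lambda>s. \<Sum>a1\<le>N. \<Sum>a2\<le>N - a1. phi_deriv n k1 k2 a1 a2 * (Rc ^ a1 / fact a1) * (\<xi> s ^ a2 / fact a2))"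
    have Hr: "H_int n k1 k2 kappa delta = integral {-pi..pi} (\<lambda>s. \<Phi> s * F s)"
      unfolding \<Phi>_def F_def \<xi>_def Rc_def using H_rewrite[OF H(1,2)] .
    have Tr: "integral {-pi..pi} (\<lambda>s. \<Phi> s * T s) = 2 * of_real pi * (\<Sum>a1\<le>N. \<Sum>a2\<le>N - a1.
                      of_real (besselI (int (n + k1 - 1) - int a2) kappa)
                      * phi_deriv n k1 k2 a1 a2
                      * of_real (kappa ^ a1 / (2 ^ a1 * fact a1 * fact a2))
                      * of_real (delta ^ (a1 + a2)))"
      unfolding \<Phi>_def T_def \<xi>_def Rc_def by (rule T_integral)
    have cG: "continuous_on {-pi..pi} (\<lambda>s. Gfun (\<xi> s))" unfolding \<xi>_def
      by (rule cont_comp[OF G_hol]) (use H in auto)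
    have cH: "continuous_on {-pi..pi} (\<lambda>s. hfun (n+k1) k1 (n+k1+k2) (\<xi> s))" unfolding \<xi>_def
      by (rule cont_comp[OF h_hol]) (use H in auto)
    have iF: "(\<lambda>s. \<Phi> s * F s) integrable_on {-pi..pi}"
      unfolding \<Phi>_def F_def by (intro integrable_continuous_interval continuous_intros cG cH)
    have iT: "(\<lambda>s. \<Phi> s * T s) integrable_on {-pi..pi}"
      unfolding \<Phi>_def T_def \<xi>_def by (intro integrable_continuous_interval continuous_intros) (simp_all add: fact_nonzero)
    have "H_int n k1 k2 kappa delta - integral {-pi..pi} (\<lambda>s. \<Phi> s * T s)
        = integral {-pi..pi} (\<lambda>s. \<Phi> s * F s - \<Phi> s * T s)"
      unfolding Hr using iF iT by (simp add: integral_diff)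
    also have "norm \<dots> \<le> exp C * (M0 * delta ^ Suc N) * (pi - - pi)"
    proof (rule integral_norm_le_const)
      show "(\<lambda>s. \<Phi> s * F s - \<Phi> s * T s) integrable_on {-pi..pi}" using iF iT by (rule integrable_diff)
      show "- pi \<le> pi" using pi_ge_zero by linarith
      fix s :: real
      have nP: "norm (\<Phi> s) \<le> exp C"
      proof -
        have "norm (\<Phi> s) = exp (kappa * cos s)" unfolding \<Phi>_def by (simp add: norm_mult norm_exp_eq_Re)
        also have "\<dots> \<le> exp C"
        proof -
          have "kappa * cos s \<le> kappa * 1" using H(4) by (intro mult_left_mono) auto
          thus ?thesis using H(4) by simp
        qed
        finally show ?thesis .
      qed
      have nx: "norm (\<xi> s) = delta" unfolding \<xi>_def using H(1) by (intro norm_xi) simp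
      have nR: "norm Rc \<le> C * norm (\<xi> s)"
      proof -
        have "norm Rc = kappa * delta / 2" unfolding Rc_def using H(1,4) by (simp add: norm_mult)
        also have "\<dots> \<le> C * delta" using H(1,4) by (simp add: mult_right_mono)
        finally show ?thesis using nx by simp
      qed
      have nFT: "norm (F s - T s) \<le> M0 * delta ^ Suc N"
        using M0(2)[of "\<xi> s" Rc] nR nx H(3) unfolding F_def T_def by simp
      have "norm (\<Phi> s * F s - \<Phi> s * T s) = norm (\<Phi> s) * norm (F s - T s)"
        by (simp add: right_diff_distrib[symmetric] norm_mult)
      also have "\<dots> \<le> exp C * (M0 * delta ^ Suc N)" using nP nFT by (intro mult_mono) auto
      finally show "norm (\<Phi> s * F s - \<Phi> s * T s) \<le> exp C * (M0 * delta ^ Suc N)" .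
    qed
    also have "\<dots> = (2 * pi * exp C * M0) * delta ^ (N + 1)" by simp
    also have "\<dots> \<le> M * delta ^ (N + 1)" unfolding M_def using H(1) by (intro mult_right_mono) auto
    finally show ?thesis unfolding Tr .
  qed
  show "\<exists>M>0. \<exists>d0>0. \<forall>delta kappa.
           0 < delta \<and> delta < 1 \<and> delta < d0 \<and> kappa \<in> {0..C} \<longrightarrow>
           norm (H_int n k1 k2 kappa delta
                 - 2 * of_real pi * (\<Sum>a1\<le>N. \<Sum>a2\<le>N - a1.
                      of_real (besselI (int (n + k1 - 1) - int a2) kappa)
                      * phi_deriv n k1 k2 a1 a2
                      * of_real (kappa ^ a1 / (2 ^ a1 * fact a1 * fact a2))
                      * of_real (delta ^ (a1 + a2))))
           \<le> M * delta ^ (N + 1)"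
    using Mpos main by (intro exI[of _ M] conjI exI[of _ "1/2::real"]) auto
qed


end
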